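(* Let $\mathcal{G}$ be an $m$-uniform $k$-regular hypergraph with $n$ vertices, and let $\theta=\binom{n-2}{m-2}/(m-1)$. Then the minimum eigenvalue $\lambda_n$ of $A_{\mathcal{G}}$ satisfies $\lambda_n\ge k-\theta-\binom{n-1}{m-1}$.
   Context: A hypergraph $\mathcal{G}=(V,E)$ has a finite vertex set $V$ and a set $E$ of subsets of $V$ (edges), each of cardinality at least $2$; it is $m$-uniform if every edge has exactly $m$ vertices, and $k$-regular if every vertex lies in exactly $k$ edges. The adjacency matrix $A_{\mathcal{G}}$ has $(A_{\mathcal{G}})_{ij}=\sum_{e\in E,\, i,j\in e}\frac{1}{|e|-1}$ for $i\ne j$ and zero diagonal. *)

theory Defs
  imports "Jordan_Normal_Form.Char_Poly"
begin

definition hypergraph :: "nat \<Rightarrow> nat set set \<Rightarrow> bool" where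
  "hypergraph n E \<longleftrightarrow> (\<forall>e\<in>E. e \<subseteq> {..<n} \<and> card e \<ge> 2)"

definition uniform_hg :: "nat \<Rightarrow> nat set set \<Rightarrow> bool" where
  "uniform_hg m E \<longleftrightarrow> (\<forall>e\<in>E. card e = m)"

definition regular_hg :: "nat \<Rightarrow> nat \<Rightarrow> nat set set \<Rightarrow> bool" where
  "regular_hg n k E \<longleftrightarrow> (\<forall>v<n. card {e\<in>E. v \<in> e} = k)"

definition hg_adj :: "nat \<Rightarrow> nat set set \<Rightarrow> real mat" where
  "hg_adj n E = mat n n (\<lambda>(i,j). if i = j then 0
      else (\<Sum>e\<in>{e\<in>E. i \<in> e \<and> j \<in> e}. 1 / (real (card e) - 1)))"

end

theory Submission
  imports Defs
begin

lemma adj_entry: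
  assumes "uniform_hg m E" "i < n" "j < n"
  shows "hg_adj n E $$ (i,j) = (if i = j then 0 else real (card {e\<in>E. i \<in> e \<and> j \<in> e}) / (real m - 1))"
proof -
  have "(\<Sum>e\<in>{e\<in>E. i \<in> e \<and> j \<in> e}. 1 / (real (card e) - 1))
        = (\<Sum>e\<in>{e\<in>E. i \<in> e \<and> j \<in> e}. 1 / (real m - 1))"
    using assms(1) by (intro sum.cong) (auto simp: uniform_hg_def)
  then show ?thesis using assms by (simp add: hg_adj_def)
qed

lemma finite_E: assumes "hypergraph n E" shows "finite E"
proof -
  have "E \<subseteq> Pow {..<n}" using assms by (auto simp: hypergraph_def)
  then show ?thesis by (meson finite_Pow_iff finite_lessThan finite_subset)
qed

lemma pair_count:
  assumes "hypergraph n E" "uniform_hg m E" "i < n" "j < n" "i \<noteq> j"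
  shows "card {e\<in>E. i \<in> e \<and> j \<in> e} \<le> (n - 2) choose (m - 2)"
proof -
  let ?S = "{e\<in>E. i \<in> e \<and> j \<in> e}"
  let ?T = "{s. s \<subseteq> {..<n} - {i,j} \<and> card s = m - 2}"
  have "inj_on (\<lambda>e. e - {i,j}) ?S"
  proof (rule inj_onI)
    fix x y assume "x \<in> ?S" "y \<in> ?S" "x - {i,j} = y - {i,j}"
    then show "x = y" by blast
  qed
  moreover have "(\<lambda>e. e - {i,j}) ` ?S \<subseteq> ?T"
  proof
    fix s assume "s \<in> (\<lambda>e. e - {i,j}) ` ?S"
    then obtain e where e: "e \<in> E" "i \<in> e" "j \<in> e" "s = e - {i,j}" by auto
    have sub: "e \<subseteq> {..<n}" using e assms(1) by (auto simp: hypergraph_def)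
    have fe: "finite e" using sub finite_subset by blast
    have "card e = m" using e assms(2) by (auto simp: uniform_hg_def)
    moreover have "card (e - {i,j}) = card e - card {i,j}"
      using fe e by (intro card_Diff_subset) auto
    ultimately have "card s = m - 2" using e assms(5) by simp
    then show "s \<in> ?T" using sub e by auto
  qed
  moreover have "finite ?T" by simp
  ultimately have "card ?S \<le> card ?T"
    by (meson card_inj_on_le)
  also have "card ?T = card ({..<n} - {i,j}) choose (m - 2)"
    by (rule n_subsets) simp
  also have "card ({..<n} - {i,j}) = n - 2"
    using assms(3-5) by (subst card_Diff_subset) auto
  finally show ?thesis .
qed

lemma row_sum:
  assumes "hypergraph n E" "uniform_hg m E" "regular_hg n k E" "m \<ge> 2" "i < n"
  shows "(\<Sum>j<n. (if i = j then 0 else real (card {e\<in>E. i \<in> e \<and> j \<in> e}) / (real m - 1))) = real k"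
proof -
  have fE: "finite E" using finite_E[OF assms(1)] .
  let ?Ei = "{e\<in>E. i \<in> e}"
  have "(\<Sum>j<n. real (card {e\<in>E. i \<in> e \<and> j \<in> e \<and> j \<noteq> i}))
      = (\<Sum>j<n. \<Sum>e\<in>?Ei. (if j \<in> e \<and> j \<noteq> i then 1 else 0 :: real))"
  proof (rule sum.cong)
    fix j assume "j \<in> {..<n}"
    have "{e\<in>E. i \<in> e \<and> j \<in> e \<and> j \<noteq> i} = {e\<in>?Ei. j \<in> e \<and> j \<noteq> i}" by auto
    moreover have "(\<Sum>e\<in>?Ei. (if j \<in> e \<and> j \<noteq> i then 1 else 0 :: real)) = real (card {e\<in>?Ei. j \<in> e \<and> j \<noteq> i})"
      using fE by (simp add: sum.If_cases Int_def)
    ultimately show "real (card {e\<in>E. i \<in> e \<and> j \<in> e \<and> j \<noteq> i}) = (\<Sum>e\<in>?Ei. (if j \<in> e \<and> j \<noteq> i then 1 else 0 :: real))"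
      by simp
  qed simp
  also have "\<dots> = (\<Sum>e\<in>?Ei. \<Sum>j<n. (if j \<in> e \<and> j \<noteq> i then 1 else 0 :: real))"
    by (rule sum.swap)
  also have "\<dots> = (\<Sum>e\<in>?Ei. real m - 1)"
  proof (rule sum.cong)
    fix e assume e: "e \<in> ?Ei"
    have sub: "e \<subseteq> {..<n}" using e assms(1) by (auto simp: hypergraph_def)
    have fe: "finite e" using sub finite_subset by blast
    have ce: "card e = m" using e assms(2) by (auto simp: uniform_hg_def)
    have "(\<Sum>j<n. (if j \<in> e \<and> j \<noteq> i then 1 else 0 :: real)) = real (card ({..<n} \<inter> {j. j \<in> e \<and> j \<noteq> i}))"
      by (simp add: sum.If_cases)
    also have "{..<n} \<inter> {j. j \<in> e \<and> j \<noteq> i} = e - {i}" using sub by auto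
    also have "card (e - {i}) = m - 1" using fe e ce by simp
    finally show "(\<Sum>j<n. (if j \<in> e \<and> j \<noteq> i then 1 else 0 :: real)) = real m - 1"
      using assms(4) by simp
  qed simp
  also have "\<dots> = real k * (real m - 1)"
    using assms(3,5) by (simp add: regular_hg_def)
  finally have X: "(\<Sum>j<n. real (card {e\<in>E. i \<in> e \<and> j \<in> e \<and> j \<noteq> i})) = real k * (real m - 1)" .
  have "(\<Sum>j<n. (if i = j then 0 else real (card {e\<in>E. i \<in> e \<and> j \<in> e}) / (real m - 1)))
      = (\<Sum>j<n. real (card {e\<in>E. i \<in> e \<and> j \<in> e \<and> j \<noteq> i}) / (real m - 1))"
    by (intro sum.cong) auto
  also have "\<dots> = (\<Sum>j<n. real (card {e\<in>E. i \<in> e \<and> j \<in> e \<and> j \<noteq> i})) / (real m - 1)"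
    by (simp add: sum_divide_distrib)
  also have "\<dots> = real k" using X assms(4) by simp
  finally show ?thesis .
qed

theorem proposition1:
  fixes n m k :: nat and E :: "nat set set"
  assumes "hypergraph n E"
    and "m \<ge> 2"
    and "uniform_hg m E"
    and "regular_hg n k E"
  shows "\<forall>l. eigenvalue (hg_adj n E) l \<longrightarrow>
           l \<ge> real k - real ((n - 2) choose (m - 2)) / real (m - 1)
                 - real ((n - 1) choose (m - 1))"
proof (intro allI impI)
  fix l assume "eigenvalue (hg_adj n E) l"
  then obtain v where v: "v \<in> carrier_vec n" "v \<noteq> 0\<^sub>v n" "hg_adj n E *\<^sub>v v = l \<cdot>\<^sub>v v"
    by (auto simp: eigenvalue_def eigenvector_def hg_adj_def)
  define a where "a i j = (if i = j then 0 else real (card {e\<in>E. i \<in> e \<and> j \<in> e}) / (real m - 1))" for i j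
  define \<theta> where "\<theta> = real ((n - 2) choose (m - 2)) / real (m - 1)"
  define C where "C = real ((n - 1) choose (m - 1))"
  have m1: "real m - 1 > 0" using assms(2) by simp
  have asym: "a i j = a j i" for i j unfolding a_def by (auto simp: conj_commute)
  have rs: "(\<Sum>j<n. a i j) = real k" if "i < n" for i
    using row_sum[OF assms(1,3,4,2) that] by (simp add: a_def)
  have ale: "a i j \<le> \<theta>" if "i < n" "j < n" for i j
  proof (cases "i = j")
    case True then show ?thesis by (simp add: a_def \<theta>_def)
  next
    case False
    have "real (card {e\<in>E. i \<in> e \<and> j \<in> e}) \<le> real ((n - 2) choose (m - 2))"
      using pair_count[OF assms(1,3) that False] by simp
    then show ?thesis using False m1 assms(2) by (simp add: a_def \<theta>_def divide_right_mono of_nat_diff)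
  qed
  have eq: "l * v $ i = (\<Sum>j<n. a i j * v $ j)" if "i < n" for i
  proof -
    have "(hg_adj n E *\<^sub>v v) $ i = (l \<cdot>\<^sub>v v) $ i" using v(3) by simp
    then have "l * v $ i = (\<Sum>j<n. hg_adj n E $$ (i,j) * v $ j)" using that v(1)
      by (simp add: hg_adj_def scalar_prod_def lessThan_atLeast0)
    also have "\<dots> = (\<Sum>j<n. a i j * v $ j)"
      using that by (intro sum.cong refl) (simp add: adj_entry[OF assms(3)] a_def)
    finally show ?thesis .
  qed
  show "l \<ge> real k - \<theta> - C" unfolding \<theta>_def[symmetric] C_def[symmetric]
  proof (cases "l = real k")
    case True
    have "\<theta> \<ge> 0" "C \<ge> 0" unfolding \<theta>_def C_def by auto
    then show ?thesis using True by simp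
  next
    case False
    have "(\<Sum>i<n. l * v $ i) = (\<Sum>i<n. \<Sum>j<n. a i j * v $ j)" using eq by simp
    also have "\<dots> = (\<Sum>j<n. \<Sum>i<n. a i j * v $ j)" by (rule sum.swap)
    also have "\<dots> = (\<Sum>j<n. real k * v $ j)"
      by (intro sum.cong refl) (simp add: sum_distrib_right[symmetric] asym rs)
    finally have "l * (\<Sum>i<n. v $ i) = real k * (\<Sum>i<n. v $ i)"
      by (simp add: sum_distrib_left)
    then have s0: "(\<Sum>i<n. v $ i) = 0" using False by simp
    have "\<exists>j<n. v $ j \<noteq> 0"
    proof (rule ccontr)
      assume "\<not> ?thesis"
      then have "v = 0\<^sub>v n" using v(1) by (intro eq_vecI) auto
      then show False using v(2) by simp
    qed
    then obtain j0 where j0: "j0 < n" "v $ j0 \<noteq> 0" by auto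
    define M where "M = Max ((\<lambda>j. \<bar>v $ j\<bar>) ` {..<n})"
    have "M \<in> (\<lambda>j. \<bar>v $ j\<bar>) ` {..<n}" unfolding M_def using j0 by (intro Max_in) auto
    then obtain i where i: "i < n" "\<bar>v $ i\<bar> = M" by auto
    have Mge: "\<bar>v $ j\<bar> \<le> \<bar>v $ i\<bar>" if "j < n" for j
      unfolding i(2) M_def using that by (intro Max_ge) auto
    have vi: "\<bar>v $ i\<bar> > 0" using Mge[OF j0(1)] j0(2) by simp
    define b where "b j = (if j = i then 0 else \<theta> - a i j)" for j
    have b0: "b j \<ge> 0" if "j < n" for j using ale[OF i(1) that] by (simp add: b_def)
    have sumb: "(\<Sum>j<n. b j) = \<theta> * (real n - 1) - real k"
    proof -
      have cc: "card ({x. x < n} \<inter> - {i}) = n - 1"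
      proof -
        have "{x. x < n} \<inter> - {i} = {..<n} - {i}" by auto
        then show ?thesis using i(1) by simp
      qed
      have "(\<Sum>j<n. b j) = (\<Sum>j<n. (if j = i then 0 else \<theta>) - a i j)"
        by (intro sum.cong) (auto simp: b_def a_def)
      also have "\<dots> = (\<Sum>j<n. (if j = i then 0 else \<theta>)) - real k"
        by (simp add: sum_subtractf rs[OF i(1)])
      also have "(\<Sum>j<n. (if j = i then 0 else \<theta>)) = \<theta> * (real n - 1)"
        using i(1) cc by (simp add: sum.If_cases card_Diff_subset Int_absorb1 lessThan_def
            of_nat_diff algebra_simps)
      finally show ?thesis .
    qed
    have sumbv: "(\<Sum>j<n. b j * v $ j) = - (\<theta> + l) * v $ i"
    proof -
      have "(\<Sum>j<n. b j * v $ j) = (\<Sum>j<n. \<theta> * v $ j - (if j = i then \<theta> * v $ j else 0) - a i j * v $ j)"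
        by (intro sum.cong) (auto simp: b_def a_def algebra_simps)
      also have "\<dots> = \<theta> * (\<Sum>j<n. v $ j) - \<theta> * v $ i - (\<Sum>j<n. a i j * v $ j)"
        using i(1) by (simp add: sum_subtractf sum_distrib_left sum.If_cases Int_absorb1 lessThan_def)
      also have "\<dots> = - (\<theta> + l) * v $ i" using s0 eq[OF i(1)] by (simp add: algebra_simps)
      finally show ?thesis .
    qed
    have "\<bar>\<theta> + l\<bar> * \<bar>v $ i\<bar> = \<bar>\<Sum>j<n. b j * v $ j\<bar>" using sumbv by (simp add: abs_mult abs_minus_commute add.commute)
    also have "\<dots> \<le> (\<Sum>j<n. \<bar>b j * v $ j\<bar>)" by (rule sum_abs)
    also have "\<dots> \<le> (\<Sum>j<n. b j * \<bar>v $ i\<bar>)"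
      using b0 Mge by (intro sum_mono) (simp add: abs_mult mult_left_mono)
    also have "\<dots> = (\<theta> * (real n - 1) - real k) * \<bar>v $ i\<bar>"
      by (simp add: sum_distrib_right[symmetric] sumb)
    finally have "\<bar>\<theta> + l\<bar> \<le> \<theta> * (real n - 1) - real k" using vi by simp
    then have lb: "l \<ge> real k - \<theta> * real n" by (simp add: algebra_simps abs_le_iff)
    have "\<theta> * real n \<le> \<theta> + C"
    proof (cases "n \<ge> 2")
      case True
      obtain a' where a': "n = Suc (Suc a')" using True by (metis add_2_eq_Suc le_Suc_ex)
      obtain b' where b': "m = Suc (Suc b')" using assms(2) by (metis add_2_eq_Suc le_Suc_ex)
      have "Suc a' * (a' choose b') = (Suc a' choose Suc b') * Suc b'"
        by (rule Suc_times_binomial_eq)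
      then have "real (Suc a') * real (a' choose b') = real (Suc a' choose Suc b') * real (Suc b')"
        by (metis of_nat_mult)
      then have "\<theta> * (real n - 1) = C"
        unfolding \<theta>_def C_def a' b' by (simp add: field_simps)
      then show ?thesis by (simp add: algebra_simps)
    next
      case False
      have "\<theta> \<ge> 0" "C \<ge> 0" unfolding \<theta>_def C_def by auto
      moreover have "n \<le> 1" using False by simp
      ultimately have "\<theta> * real n \<le> \<theta>" by (simp add: mult_left_le)
      then show ?thesis using \<open>C \<ge> 0\<close> by simp
    qed
    then show ?thesis using lb by simp
  qed
qed

end
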